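(* Let $m$ be a positive integer with $3\mid 2^m+1$, $n=2m$, let $s$ be an integer with $\gcd(s,2^m+1)=1$, and let $a=\overline{a}\xi^k\in\mathbb{F}_{2^n}^*$ with $\overline{a}\in\mathbb{F}_{2^m}$ and $0\le k\le 2^m$. Define $f:\mathbb{F}_{2^n}\to\mathbb{F}_2$ by $f(0)=0$ and $$f(x)=\sum_{i=1}^{\frac{2^m+1}{3}-1}{\rm Tr}_1^n\big(ax^{(3i+s)(2^m-1)}\big).$$ Then $f$ is bent if and only if $$K_m(\overline{a})=3-\sum_{j=0}^{2}(-1)^{{\rm Tr}_1^n(a\xi^{j\frac{2^m+1}{3}})}.$$ Furthermore, if $f$ is bent, then $K_m(\overline{a})=0$ when ${\rm Tr}_1^n(a)={\rm Tr}_1^n(a\xi^{\frac{2^m+1}{3}})={\rm Tr}_1^n(a\xi^{2\frac{2^m+1}{3}})=0$, and $K_m(\overline{a})=4$ otherwise.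
   Context: ${\rm Tr}_k^t$ is the trace map from $\mathbb{F}_{2^t}$ to $\mathbb{F}_{2^k}$. $\xi$ is a fixed generator of the cyclic group $U=\{x\in\mathbb{F}_{2^n}:x^{2^m+1}=1\}$. $K_m(\beta)=\sum_{x\in\mathbb{F}_{2^m}}(-1)^{{\rm Tr}_1^m(\beta x+x^{2^m-2})}$. A function $f:\mathbb{F}_{2^n}\to\mathbb{F}_2$ is bent if $|W_f(\lambda)|^2=2^n$ for all $\lambda$, where $W_f(\lambda)=\sum_{x}(-1)^{f(x)+{\rm Tr}_1^n(\lambda x)}$. *)

theory Defs
  imports Main
begin

definition tr :: "nat \<Rightarrow> 'a::field \<Rightarrow> 'a" where
  "tr k x = (\<Sum>i<k. x ^ (2 ^ i))"

text \<open>(-1)^y for y in F_2 = {0,1} inside the field.\<close>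
definition chi :: "'a::field \<Rightarrow> int" where
  "chi y = (if y = 0 then 1 else -1)"

definition subF :: "nat \<Rightarrow> 'a::field set" where
  "subF m = {x. x ^ (2 ^ m) = x}"

definition unitU :: "nat \<Rightarrow> 'a::field set" where
  "unitU m = {x. x ^ (2 ^ m + 1) = 1}"

definition kloost :: "nat \<Rightarrow> 'a::field \<Rightarrow> int" where
  "kloost m \<beta> = (\<Sum>x\<in>subF m. chi (tr m (\<beta> * x + x ^ (2 ^ m - 2))))"

text \<open>Walsh transform and bentness over F_{2^n}; f takes values in {0,1} of the field.\<close>
definition walsh :: "nat \<Rightarrow> ('a::{field,finite} \<Rightarrow> 'a) \<Rightarrow> 'a \<Rightarrow> int" where
  "walsh n f l = (\<Sum>x\<in>UNIV. chi (f x + tr n (l * x)))"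

definition bent :: "nat \<Rightarrow> ('a::{field,finite} \<Rightarrow> 'a) \<Rightarrow> bool" where
  "bent n f \<longleftrightarrow> (\<forall>l. (walsh n f l)\<^sup>2 = 2 ^ n)"

end

theory Submission
  imports Defs "HOL-Computational_Algebra.Polynomial"
begin

locale ff =
  fixes m :: nat and TY :: "'a::{field,finite} itself"
  assumes mpos: "m > 0" and cardF: "card (UNIV :: 'a set) = 2 ^ (2*m)"
begin

lemma two0: "(2::'a) = 0"
proof -
  have "(\<Sum>x::'a\<in>UNIV. x + 1) = (\<Sum>x\<in>UNIV. x)"
    by (rule sum.reindex_bij_witness[of _ "\<lambda>x. x - 1" "\<lambda>x. x+1"]) auto
  hence "(\<Sum>x::'a\<in>UNIV. x) + of_nat (card (UNIV::'a set)) = (\<Sum>x\<in>UNIV. x)"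
    by (simp add: sum.distrib)
  hence "(of_nat (2 ^ (2*m)) :: 'a) = 0" using cardF by simp
  hence "(2::'a) ^ (2*m) = 0" by simp
  thus ?thesis by simp
qed

lemma add_self[simp]: "(x::'a) + x = 0"
proof -
  have "x + x = 2 * x" by simp
  thus ?thesis using two0 by simp
qed

lemma neg_eq[simp]: "- (x::'a) = x"
  using add_self[of x] by (metis add_eq_0_iff)

lemma minus_eq: "(x::'a) - y = x + y"
  by (metis diff_conv_add_uminus neg_eq)

lemma sq_add: "((x::'a) + y)^2 = x^2 + y^2"
  by (simp add: power2_sum two0)

lemma pow2i_add: "((x::'a) + y)^(2^i) = x^(2^i) + y^(2^i)"
proof (induction i)
  case 0 thus ?case by simp
next
  case (Suc i)
  have "(x+y)^(2^Suc i) = ((x+y)^(2^i))^2" by (simp add: power_mult[symmetric] mult.commute)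
  also have "\<dots> = (x^(2^i))^2 + (y^(2^i))^2" by (simp add: Suc sq_add)
  also have "\<dots> = x^(2^Suc i) + y^(2^Suc i)" by (simp add: power_mult[symmetric] mult.commute)
  finally show ?case .
qed

lemma pow2i_sum: "(sum f A :: 'a)^(2^i) = (\<Sum>j\<in>A. (f j)^(2^i))"
proof (induction A rule: infinite_finite_induct)
  case (infinite A) thus ?case by simp
next
  case empty thus ?case by simp
next
  case (insert x F) thus ?case by (simp add: pow2i_add)
qed

lemma fermat1: assumes "(x::'a) \<noteq> 0" shows "x ^ (2^(2*m) - 1) = 1"
proof -
  let ?B = "UNIV - {0::'a}"
  have "(\<Prod>y\<in>?B. x * y) = (\<Prod>y\<in>?B. y)"
    by (rule prod.reindex_bij_witness[of _ "\<lambda>y. y / x" "\<lambda>y. x * y"]) (use assms in auto)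
  hence "x ^ card ?B * (\<Prod>y\<in>?B. y) = (\<Prod>y\<in>?B. y)" by (simp add: prod.distrib)
  moreover have "(\<Prod>y\<in>?B. y) \<noteq> 0" by simp
  ultimately have "x ^ card ?B = 1" by simp
  moreover have "card ?B = 2^(2*m) - 1" using cardF by (simp add: card_Diff_singleton)
  ultimately show ?thesis by simp
qed

lemma fermat: "(x::'a) ^ (2^(2*m)) = x"
proof (cases "x = 0")
  case True thus ?thesis by simp
next
  case False
  have "x ^ (2^(2*m)) = x ^ (2^(2*m) - 1) * x"
    by (simp add: power_Suc2[symmetric])
  thus ?thesis using fermat1[OF False] by simp
qed

lemma tr0[simp]: "tr k (0::'a) = 0" by (auto simp: tr_def intro!: sum.neutral)

lemma tr_add: "tr k ((x::'a) + y) = tr k x + tr k y"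
  by (simp add: tr_def pow2i_add sum.distrib)

lemma tr_sum: "tr k (sum f A :: 'a) = (\<Sum>j\<in>A. tr k (f j))"
proof (induction A rule: infinite_finite_induct)
  case (infinite A) thus ?case by simp
next
  case empty thus ?case by simp
next
  case (insert x F) thus ?case by (simp add: tr_add)
qed

lemma tr_shift: assumes "(x::'a)^(2^k) = x" shows "(\<Sum>i<k. x^(2^Suc i)) = tr k x"
proof -
  have "(\<Sum>i<Suc k. x^(2^i)) = x^(2^0) + (\<Sum>i<k. x^(2^Suc i))"
    by (rule sum.lessThan_Suc_shift)
  moreover have "(\<Sum>i<Suc k. x^(2^i)) = tr k x + x^(2^k)" by (simp add: tr_def)
  ultimately show ?thesis using assms by (simp add: add.commute)
qed

lemma tr_sq: assumes "(x::'a)^(2^k) = x" shows "(tr k x)^2 = tr k x"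
proof -
  have "(tr k x)^2 = (tr k x)^(2^1)" by simp
  also have "\<dots> = (\<Sum>i<k. (x^(2^i))^(2^1))" unfolding tr_def by (rule pow2i_sum)
  also have "\<dots> = (\<Sum>i<k. x^(2^Suc i))" by (simp add: power_mult[symmetric] mult.commute)
  finally show ?thesis using tr_shift[OF assms] by simp
qed

lemma tr_sq_arg: assumes "(x::'a)^(2^k) = x" shows "tr k (x^2) = tr k x"
proof -
  have "tr k (x^2) = (\<Sum>i<k. x^(2^Suc i))" unfolding tr_def
    by (simp add: power_mult[symmetric] mult.commute)
  thus ?thesis using tr_shift[OF assms] by simp
qed

lemma sq01: "(y::'a)^2 = y \<Longrightarrow> y = 0 \<or> y = 1"
  by (metis (no_types, lifting) mult_cancel_left2 power2_eq_square)

lemma tr01: "(x::'a)^(2^k) = x \<Longrightarrow> tr k x = 0 \<or> tr k x = 1"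
  using tr_sq sq01 by blast

lemma tr01n: "tr (2*m) (x::'a) = 0 \<or> tr (2*m) x = 1"
  using tr01 fermat by blast

lemma sq_inj: "(x::'a)^2 = y^2 \<Longrightarrow> x = y"
proof -
  assume "x^2 = y^2"
  hence "(x+y)^2 = 0" by (simp add: sq_add)
  hence "x + y = 0" by simp
  thus "x = y" by (metis add_self add_left_cancel)
qed

lemma chi_add: "y = 0 \<or> y = 1 \<Longrightarrow> z = 0 \<or> z = (1::'a) \<Longrightarrow> chi (y + z) = chi y * chi z"
  by (auto simp: chi_def)

end

context ff
begin

lemma roots_le:
  fixes p :: "'a poly"
  assumes "p \<noteq> 0" "degree p \<le> d" "\<And>x. P x \<Longrightarrow> poly p x = 0"
  shows "card {x. P x} \<le> d"
proof -
  have "card {x. P x} \<le> card {x. poly p x = 0}"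
    by (rule card_mono) (use assms(3) in auto)
  also have "\<dots> \<le> degree p" by (rule card_poly_roots_bound[OF assms(1)])
  finally show ?thesis using assms(2) by simp
qed

lemma card_pow_eq: assumes "d \<ge> 2" shows "card {x::'a. x^d = x} \<le> d"
proof (rule roots_le[where p = "monom 1 d - monom 1 1"])
  have "coeff (monom (1::'a) d - monom 1 1) d = 1" using assms by (simp add: coeff_monom)
  thus "monom (1::'a) d - monom 1 1 \<noteq> 0" by (metis coeff_0 one_neq_zero)
  show "degree (monom (1::'a) d - monom 1 1) \<le> d"
    by (rule order.trans[OF degree_diff_le_max]) (use assms in \<open>auto simp: degree_monom_eq\<close>)
  show "poly (monom 1 d - monom 1 1) x = 0" if "x^d = x" for x :: 'a
    using that by (simp add: poly_monom)
qed

lemma card_pow_c: assumes "d \<ge> 1" shows "card {x::'a. x^d = c} \<le> d"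
proof (rule roots_le[where p = "monom 1 d - [:c:]"])
  have "coeff (monom (1::'a) d - [:c:]) d = 1" using assms by (simp add: coeff_monom coeff_pCons split: nat.split)
  thus "monom (1::'a) d - [:c:] \<noteq> 0" by (metis coeff_0 one_neq_zero)
  show "degree (monom (1::'a) d - [:c:]) \<le> d"
    by (rule order.trans[OF degree_diff_le_max]) (use assms degree_monom_le in auto)
  show "poly (monom 1 d - [:c:]) x = 0" if "x^d = c" for x :: 'a
    using that by (simp add: poly_monom)
qed

lemma card_quad: "card {x::'a. x^2 + t*x + c = 0} \<le> 2"
proof (rule roots_le[where p = "[:c, t, 1:]"])
  show "[:c, t, 1:] \<noteq> 0" by simp
  show "degree [:c, t, 1:] \<le> 2" by simp
  show "poly [:c, t, 1:] x = 0" if "x^2 + t*x + c = 0" for x :: 'a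
    using that by (simp add: algebra_simps power2_eq_square)
qed

lemma card_tr: assumes "k \<ge> 1" shows "card {x::'a. tr k x = c} \<le> 2^(k-1)"
proof (rule roots_le[where p = "(\<Sum>i<k. monom 1 (2^i)) - [:c:]"])
  have inj: "((2::nat)^i = 2^(k-1)) = (i = k - 1)" for i by simp
  have "coeff ((\<Sum>i<k. monom (1::'a) (2^i)) - [:c:]) (2^(k-1)) = (\<Sum>i<k. if i = k-1 then 1 else 0)"
    by (simp add: coeff_sum coeff_monom coeff_pCons inj split: nat.split)
  also have "\<dots> = 1" using assms by simp
  finally show "(\<Sum>i<k. monom (1::'a) (2^i)) - [:c:] \<noteq> 0" by (metis coeff_0 one_neq_zero)
  show "degree ((\<Sum>i<k. monom (1::'a) (2^i)) - [:c:]) \<le> 2^(k-1)"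
  proof -
    have "degree (\<Sum>i<k. monom (1::'a) (2^i)) \<le> 2^(k-1)"
    proof (rule degree_sum_le)
      fix i assume "i \<in> {..<k}"
      hence "(2::nat)^i \<le> 2^(k-1)" by (intro power_increasing) auto
      thus "degree (monom (1::'a) (2^i)) \<le> 2^(k-1)" using degree_monom_le order.trans by blast
    qed simp
    thus ?thesis using degree_diff_le_max[of "\<Sum>i<k. monom (1::'a) (2^i)" "[:c:]"] by simp
  qed
  show "poly ((\<Sum>i<k. monom 1 (2^i)) - [:c:]) x = 0" if "tr k x = c" for x :: 'a
    using that by (simp add: poly_sum poly_monom tr_def)
qed

lemma balanced:
  assumes "finite S" "card S = 2^k" "k \<ge> 1" "\<forall>z\<in>S. (z::'a)^(2^k) = z"
  shows "(\<Sum>z\<in>S. chi (tr k z)) = 0"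
proof -
  define A0 where "A0 = {z\<in>S. tr k z = 0}"
  define A1 where "A1 = {z\<in>S. tr k z = 1}"
  have un: "S = A0 \<union> A1" using assms(4) tr01 unfolding A0_def A1_def by blast
  have dj: "A0 \<inter> A1 = {}" unfolding A0_def A1_def by auto
  have f0: "finite A0" "finite A1" using assms(1) unfolding A0_def A1_def by auto
  have c0: "card A0 \<le> 2^(k-1)"
    using card_tr[OF assms(3), of 0] by (rule order.trans[rotated]) (auto simp: A0_def intro!: card_mono)
  have c1: "card A1 \<le> 2^(k-1)"
    using card_tr[OF assms(3), of 1] by (rule order.trans[rotated]) (auto simp: A1_def intro!: card_mono)
  have "card A0 + card A1 = 2^k" using card_Un_disjoint[OF f0 dj] un assms(2) by simp
  moreover have "(2::nat)^k = 2 * 2^(k-1)" using assms(3) by (metis Suc_diff_le diff_Suc_1 power_Suc)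
  ultimately have eq: "card A0 = card A1" using c0 c1 by linarith
  have "(\<Sum>z\<in>S. chi (tr k z)) = (\<Sum>z\<in>A0. chi (tr k z)) + (\<Sum>z\<in>A1. chi (tr k z))"
    using sum.union_disjoint[OF f0 dj] un by simp
  also have "\<dots> = int (card A0) - int (card A1)" by (simp add: A0_def A1_def chi_def)
  finally show ?thesis using eq by simp
qed

lemma sum_lessThan_add': "(\<Sum>i<a+b. g i) = (\<Sum>i<a. g i) + (\<Sum>i<b. g (a+i))" for a b :: nat
  by (induct b) (simp_all add: add.assoc)

lemma tr_split: "tr (2*m) (w::'a) = tr m (w + w^(2^m))"
proof -
  have "tr (2*m) w = (\<Sum>i<m+m. w^(2^i))" by (simp add: tr_def mult_2)
  also have "\<dots> = (\<Sum>i<m. w^(2^i)) + (\<Sum>i<m. w^(2^(m+i)))"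
    by (rule sum_lessThan_add')
  also have "(\<Sum>i<m. w^(2^(m+i))) = tr m (w^(2^m))"
    by (simp add: tr_def power_add power_mult)
  finally have "tr (2*m) w = tr m w + tr m (w^(2^m))" by (simp add: tr_def)
  thus ?thesis by (simp add: tr_add)
qed

end

context ff
begin

abbreviation q :: nat where "q \<equiv> 2^m"
abbreviation SF :: "'a set" where "SF \<equiv> subF m"
abbreviation UU :: "'a set" where "UU \<equiv> unitU m"

definition Kset :: "'a set" where "Kset = SF - {0}"
definition fib :: "'a \<Rightarrow> 'a set" where "fib v = {x. x \<noteq> 0 \<and> x^(q-1) = v}"

lemma q_ge2: "q \<ge> 2"
proof -
  have "(2::nat)^1 \<le> 2^m" using mpos by (intro power_increasing) auto
  thus ?thesis by simp
qed

lemma QQ: "(2::nat)^(2*m) = q * q" by (simp add: power_mult power2_eq_square mult.commute)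

lemma fermatq: "(x::'a)^(q*q) = x" using fermat QQ by simp

lemma subF_iff: "x \<in> SF \<longleftrightarrow> x^q = x" by (simp add: subF_def)

lemma subF_0[simp]: "(0::'a) \<in> SF" by (simp add: subF_iff)
lemma subF_1[simp]: "(1::'a) \<in> SF" by (simp add: subF_iff)
lemma subF_add: "x \<in> SF \<Longrightarrow> y \<in> SF \<Longrightarrow> (x::'a) + y \<in> SF"
  by (simp add: subF_iff pow2i_add)
lemma subF_mult: "x \<in> SF \<Longrightarrow> y \<in> SF \<Longrightarrow> (x::'a) * y \<in> SF"
  by (simp add: subF_iff power_mult_distrib)
lemma subF_inv: "x \<in> SF \<Longrightarrow> inverse (x::'a) \<in> SF"
  by (simp add: subF_iff power_inverse)
lemma subF_div: "x \<in> SF \<Longrightarrow> y \<in> SF \<Longrightarrow> (x::'a) / y \<in> SF"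
  by (simp add: divide_inverse subF_mult subF_inv)
lemma subF_pow: "x \<in> SF \<Longrightarrow> (x::'a)^k \<in> SF"
  by (simp add: subF_iff) (metis power_mult mult.commute)

lemma qm1: "(q - 1) * (q + 1) = q * q - 1"
  using q_ge2 by (cases q) (auto simp: algebra_simps)

lemma pow_q: "(x::'a)^q = x^(q-1) * x"
  using q_ge2 by (simp add: power_Suc2[symmetric])

lemma K_iff: "y \<in> Kset \<longleftrightarrow> (y::'a) \<noteq> 0 \<and> y^(q-1) = 1"
  by (auto simp: Kset_def subF_iff pow_q mult_cancel_right2)

lemma U_iff: "v \<in> UU \<longleftrightarrow> v^(q+1) = 1" by (simp add: unitU_def)

lemma U_nz: "v \<in> UU \<Longrightarrow> (v::'a) \<noteq> 0" by (auto simp: U_iff)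

lemma pow_in_U: assumes "(x::'a) \<noteq> 0" shows "x^(q-1) \<in> UU"
proof -
  have "(x^(q-1))^(q+1) = x^(q*q - 1)" by (simp only: power_mult[symmetric] qm1)
  hence "(x^(q-1))^(q+1) = x^(2^(2*m) - 1)" by (simp only: QQ)
  thus ?thesis using fermat1[OF assms] by (simp add: U_iff)
qed

lemma card_subF_le: "card SF \<le> q"
  using card_pow_eq[OF q_ge2] by (simp add: subF_def)

lemma card_U_le: "card UU \<le> q + 1"
  using card_pow_c[of "q+1" 1] by (simp add: unitU_def)

lemma fib_repr: assumes "x0 \<in> fib v" shows "fib v = (\<lambda>y. x0 * y) ` Kset"
proof
  have x0: "x0 \<noteq> 0" "x0^(q-1) = v" using assms by (auto simp: fib_def)
  hence vnz: "v \<noteq> 0" by auto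
  show "fib v \<subseteq> (\<lambda>y. x0 * y) ` Kset"
  proof
    fix x assume x: "x \<in> fib v"
    hence "x \<noteq> 0" "x^(q-1) = v" by (auto simp: fib_def)
    hence "x / x0 \<in> Kset" using x0 vnz by (simp add: K_iff power_divide)
    moreover have "x = x0 * (x / x0)" using x0 by simp
    ultimately show "x \<in> (\<lambda>y. x0 * y) ` Kset" by blast
  qed
  show "(\<lambda>y. x0 * y) ` Kset \<subseteq> fib v"
    using x0 by (auto simp: K_iff fib_def power_mult_distrib)
qed

lemma fib_le: "card (fib v) \<le> card Kset"
proof (cases "fib v = {}")
  case True thus ?thesis by simp
next
  case False
  then obtain x0 where "x0 \<in> fib v" by auto
  hence "fib v = (\<lambda>y. x0*y) ` Kset" by (rule fib_repr)
  thus ?thesis by (simp add: card_image_le)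
qed

lemma fib_sum: "(\<Sum>v\<in>UU. card (fib v)) = q * q - 1"
proof -
  have "(\<Sum>v\<in>UU. \<Sum>x\<in>{x\<in>UNIV - {0}. x^(q-1) = v}. (1::nat)) = (\<Sum>x\<in>UNIV - {0::'a}. 1)"
    by (rule sum.group) (simp, simp, blast intro: pow_in_U)
  moreover have "{x\<in>UNIV - {0}. x^(q-1) = v} = fib v" for v by (auto simp: fib_def)
  moreover have "card (UNIV - {0::'a}) = q*q - 1" using cardF QQ by (simp add: card_Diff_singleton)
  ultimately show ?thesis by simp
qed

lemma cards: "card (Kset::'a set) = q - 1 \<and> card UU = q + 1"
proof -
  have cK: "card (Kset::'a set) \<le> q - 1"
    using card_subF_le by (simp add: Kset_def card_Diff_singleton)
  have "q*q - 1 \<le> card UU * card (Kset::'a set)"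
    using fib_sum sum_mono[of "UU" "\<lambda>v. card (fib v)" "\<lambda>_. card Kset", OF fib_le] by simp
  hence le: "(q + 1) * (q - 1) \<le> card UU * card (Kset::'a set)"
    using qm1 by (simp add: mult.commute)
  show ?thesis
  proof (rule ccontr)
    assume "\<not> ?thesis"
    hence "card (Kset::'a set) < q - 1 \<or> card UU < q + 1" using cK card_U_le by linarith
    hence "card UU * card (Kset::'a set) < (q + 1) * (q - 1)"
    proof
      assume a: "card (Kset::'a set) < q - 1"
      have "card UU * card (Kset::'a set) \<le> (q+1) * card (Kset::'a set)"
        using card_U_le by (rule mult_le_mono1)
      also have "\<dots> < (q+1) * (q-1)" using a by (rule mult_less_mono2) simp
      finally show ?thesis .
    next
      assume a: "card UU < q + 1"
      have "card UU * card (Kset::'a set) \<le> card UU * (q-1)"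
        using cK by (rule mult_le_mono2)
      also have "\<dots> < (q+1) * (q-1)" using a by (rule mult_less_mono1) (use q_ge2 in simp)
      finally show ?thesis .
    qed
    thus False using le by simp
  qed
qed

lemma cardK: "card (Kset::'a set) = q - 1" using cards by simp
lemma cardU: "card UU = q + 1" using cards by simp

lemma card_subF: "card SF = q"
proof -
  have "card (Kset::'a set) = card SF - 1" by (simp add: Kset_def card_Diff_singleton)
  moreover have "card SF > 0" by (metis card_gt_0_iff finite subF_0 empty_iff)
  ultimately show ?thesis using cardK q_ge2 by simp
qed

lemma card_fib: assumes "v \<in> UU" shows "card (fib v :: 'a set) = q - 1"
proof -
  have "(\<Sum>v\<in>UU. card (Kset::'a set) - card (fib v)) =
        (\<Sum>v\<in>UU. card (Kset::'a set)) - (\<Sum>v\<in>UU. card (fib v))"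
    by (rule sum_subtractf_nat[where g="\<lambda>v. card (fib v)" and f="\<lambda>v. card Kset"]) (simp add: fib_le)
  also have "\<dots> = 0" using fib_sum cardK cardU qm1 by (simp add: mult.commute)
  finally have "\<forall>v\<in>UU. card (Kset::'a set) - card (fib v) = 0" by simp
  thus ?thesis using assms fib_le[of v] cardK by fastforce
qed

lemma fib_ex: assumes "v \<in> UU" shows "\<exists>x0. x0 \<in> fib v \<and> fib v = (\<lambda>y. x0 * y) ` Kset"
proof -
  have "fib v \<noteq> {}" 
  proof
    assume "fib v = {}"
    hence "q - 1 = 0" using card_fib[OF assms] by simp
    thus False using q_ge2 by simp
  qed
  then obtain x0 where "x0 \<in> fib v" by auto
  thus ?thesis using fib_repr by blast
qed

lemma inner: "(\<Sum>y\<in>Kset. chi (tr (2*m) ((z::'a)*y))) = (if z + z^q = 0 then int q - 1 else -1)"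
proof -
  define w where "w = z + z^q"
  have eq: "tr (2*m) (z*y) = tr m (y * w)" if "y \<in> Kset" for y
  proof -
    have "y^q = y" using that by (simp add: Kset_def subF_iff)
    hence "z*y + (z*y)^q = y * w" by (simp add: w_def power_mult_distrib algebra_simps)
    thus ?thesis by (simp add: tr_split)
  qed
  have wF: "w \<in> SF" unfolding subF_iff w_def
    by (simp add: pow2i_add power_mult[symmetric] fermatq add.commute)
  show ?thesis
  proof (cases "w = 0")
    case True
    hence "(\<Sum>y\<in>Kset. chi (tr (2*m) (z*y))) = (\<Sum>y\<in>Kset. 1)" by (simp add: eq chi_def)
    also have "\<dots> = int q - 1" using cardK q_ge2 by (simp add: of_nat_diff)
    finally show ?thesis using True w_def by simp
  next
    case False
    have "(\<Sum>y\<in>Kset. chi (tr (2*m) (z*y))) = (\<Sum>y\<in>Kset. chi (tr m (y * w)))" by (simp add: eq)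
    also have "\<dots> = (\<Sum>y\<in>SF. chi (tr m (y * w))) - chi (tr m (0 * w))"
      unfolding Kset_def by (subst sum_diff1) auto
    also have "(\<Sum>y\<in>SF. chi (tr m (y * w))) = (\<Sum>u\<in>SF. chi (tr m u))"
      by (rule sum.reindex_bij_witness[where i="\<lambda>u. u / w" and j="\<lambda>y. y * w"])
         (use False wF in \<open>auto simp: subF_mult subF_div\<close>)
    also have "\<dots> = 0"
      by (rule balanced) (use card_subF mpos in \<open>auto simp: subF_iff\<close>)
    finally show ?thesis using False w_def by (simp add: chi_def)
  qed
qed

end

context ff
begin

lemma add_eq0_iff: "(x::'a) + y = 0 \<longleftrightarrow> x = y"
  by (metis add_self add_left_cancel)

lemma fib_inner:
  assumes v: "v \<in> UU"
  shows "(\<Sum>x\<in>fib v. chi (tr (2*m) (l * x))) =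
         (if l = 0 \<or> v = inverse (l^(q-1)) then int q - 1 else -1)"
proof -
  obtain x0 where x0: "x0 \<in> fib v" and fv: "fib v = (\<lambda>y. x0 * y) ` Kset" using fib_ex[OF v] by blast
  have x0p: "x0 \<noteq> 0" "x0^(q-1) = v" using x0 by (auto simp: fib_def)
  have inj: "inj_on (\<lambda>y. x0 * y) Kset" using x0p by (auto simp: inj_on_def)
  have "(\<Sum>x\<in>fib v. chi (tr (2*m) (l * x))) = (\<Sum>y\<in>Kset. chi (tr (2*m) (l * (x0 * y))))"
    unfolding fv by (simp add: sum.reindex[OF inj])
  also have "\<dots> = (\<Sum>y\<in>Kset. chi (tr (2*m) ((l * x0) * y)))" by (simp add: mult.assoc)
  also have "\<dots> = (if l * x0 + (l*x0)^q = 0 then int q - 1 else -1)" by (rule inner)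
  also have "(l * x0 + (l*x0)^q = 0) \<longleftrightarrow> (l = 0 \<or> v = inverse (l^(q-1)))"
  proof (cases "l = 0")
    case True thus ?thesis by simp
  next
    case False
    have "(l * x0 + (l*x0)^q = 0) \<longleftrightarrow> (l*x0)^q = l * x0" by (auto simp: add_eq0_iff)
    also have "\<dots> \<longleftrightarrow> (l*x0)^(q-1) * (l*x0) = 1 * (l * x0)" by (simp add: pow_q[of "l*x0"])
    also have "\<dots> \<longleftrightarrow> (l*x0)^(q-1) = 1" using False x0p by (subst mult_cancel_right) simp
    also have "\<dots> \<longleftrightarrow> l^(q-1) * v = 1" using x0p by (simp add: power_mult_distrib)
    also have "\<dots> \<longleftrightarrow> v = inverse (l^(q-1))" using False by (auto simp: field_simps)
    finally show ?thesis using False by simp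
  qed
  finally show ?thesis .
qed

lemma walsh_formula:
  fixes G F :: "'a \<Rightarrow> 'a"
  assumes G01: "\<And>v. G v = 0 \<or> G v = 1"
    and Fdef: "\<And>x. F x = (if x = 0 then 0 else G (x^(q-1)))"
  shows "walsh (2*m) F l = (if l = 0 then 1 + (int q - 1) * (\<Sum>v\<in>UU. chi (G v))
           else 1 - (\<Sum>v\<in>UU. chi (G v)) + int q * chi (G (inverse (l^(q-1)))))"
proof -
  have F01: "F x = 0 \<or> F x = 1" for x using G01 by (simp add: Fdef)
  have "walsh (2*m) F l = (\<Sum>x\<in>UNIV. chi (F x) * chi (tr (2*m) (l * x)))"
    unfolding walsh_def by (rule sum.cong) (simp_all add: chi_add F01 tr01n)
  also have "\<dots> = chi (F 0) * chi (tr (2*m) (l * 0)) + (\<Sum>x\<in>UNIV - {0}. chi (F x) * chi (tr (2*m) (l * x)))"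
    by (subst sum.remove[of UNIV 0]) auto
  also have "chi (F 0) * chi (tr (2*m) (l * 0)) = 1" by (simp add: Fdef chi_def)
  also have "(\<Sum>x\<in>UNIV - {0}. chi (F x) * chi (tr (2*m) (l * x))) =
     (\<Sum>v\<in>UU. \<Sum>x\<in>{x\<in>UNIV - {0}. x^(q-1) = v}. chi (F x) * chi (tr (2*m) (l * x)))"
    by (rule sum.group[symmetric]) (simp, simp, blast intro: pow_in_U)
  also have "\<dots> = (\<Sum>v\<in>UU. chi (G v) * (\<Sum>x\<in>fib v. chi (tr (2*m) (l * x))))"
    by (rule sum.cong) (auto simp: sum_distrib_left fib_def Fdef intro!: sum.cong)
  also have "\<dots> = (\<Sum>v\<in>UU. chi (G v) * (if l = 0 \<or> v = inverse (l^(q-1)) then int q - 1 else -1))"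
    by (rule sum.cong) (simp_all add: fib_inner)
  finally have W: "walsh (2*m) F l = 1 + (\<Sum>v\<in>UU. chi (G v) * (if l = 0 \<or> v = inverse (l^(q-1)) then int q - 1 else -1))" .
  show ?thesis
  proof (cases "l = 0")
    case True thus ?thesis using W by (simp add: sum_distrib_right[symmetric])
  next
    case False
    define vl where "vl = inverse (l^(q-1))"
    have vlU: "vl \<in> UU" unfolding vl_def using pow_in_U[of "inverse l"] False by (simp add: power_inverse)
    have "(\<Sum>v\<in>UU. chi (G v) * (if l = 0 \<or> v = vl then int q - 1 else -1)) =
          (\<Sum>v\<in>UU. - chi (G v) + (if v = vl then int q * chi (G v) else 0))"
      by (rule sum.cong) (auto simp: False algebra_simps)
    also have "\<dots> = - (\<Sum>v\<in>UU. chi (G v)) + int q * chi (G vl)"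
      by (simp only: sum.distrib sum_negf) (simp add: vlU)
    finally show ?thesis using W False by (simp add: vl_def)
  qed
qed

lemma chi_pm: "chi y = 1 \<or> chi y = -1" by (simp add: chi_def)

lemma bent_char:
  fixes G F :: "'a \<Rightarrow> 'a"
  assumes G01: "\<And>v. G v = 0 \<or> G v = 1"
    and Fdef: "\<And>x. F x = (if x = 0 then 0 else G (x^(q-1)))"
  shows "(\<Sum>v\<in>UU. chi (G v)) = 1 \<Longrightarrow> bent (2*m) F"
    and "bent (2*m) F \<Longrightarrow> (\<Sum>v\<in>UU. chi (G v)) = 1 \<or> (int q - 1) * (\<Sum>v\<in>UU. chi (G v)) = - (int q + 1)"
proof -
  let ?S = "\<Sum>v\<in>UU. chi (G v)"
  note W = walsh_formula[OF G01 Fdef]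
  have QQi: "(2::int)^(2*m) = int q * int q" by (simp add: power_mult power2_eq_square mult.commute)
  show "bent (2*m) F" if S: "?S = 1"
    unfolding bent_def
  proof
    fix l
    show "(walsh (2*m) F l)^2 = 2^(2*m)"
    proof (cases "l = 0")
      case True
      hence "walsh (2*m) F l = int q" using W[of l] S by simp
      thus ?thesis using QQi by (simp add: power2_eq_square)
    next
      case False
      hence "walsh (2*m) F l = int q * chi (G (inverse (l^(q-1))))" using W[of l] S by simp
      thus ?thesis using QQi chi_pm[of "G (inverse (l^(q-1)))"] by (auto simp: power2_eq_square)
    qed
  qed
  show "?S = 1 \<or> (int q - 1) * ?S = - (int q + 1)" if B: "bent (2*m) F"
  proof -
    have h: "(walsh (2*m) F 0)^2 = 2^(2*m)" using B unfolding bent_def by blast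
    have "(1 + (int q - 1) * ?S)^2 = (int q)^2" using h W[of 0] QQi by (simp add: power2_eq_square)
    hence "1 + (int q - 1) * ?S = int q \<or> 1 + (int q - 1) * ?S = - int q" by (simp add: power2_eq_iff)
    moreover have "int q - 1 \<noteq> 0" using q_ge2 mpos by simp
    ultimately show ?thesis
    proof (elim disjE)
      assume "1 + (int q - 1) * ?S = int q" "int q - 1 \<noteq> 0"
      hence "(int q - 1) * ?S = int q - 1" by linarith
      hence "(int q - 1) * (?S - 1) = 0" by (simp add: right_diff_distrib)
      thus ?thesis using \<open>int q - 1 \<noteq> 0\<close> by simp
    next
      assume "1 + (int q - 1) * ?S = - int q"
      hence "(int q - 1) * ?S = - (int q + 1)" by linarith
      thus ?thesis by simp
    qed
  qed
qed

end

context ff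
begin

lemma inv_q: assumes "u \<in> UU" shows "u^q = inverse u"
proof -
  have "u^q * u = 1" using assms by (simp add: U_iff power_Suc2[symmetric])
  thus ?thesis by (metis inverse_unique mult.commute)
qed

lemma kloost_sum:
  assumes anz: "a \<noteq> 0"
  shows "(\<Sum>u\<in>UU. chi (tr (2*m) (a*u))) = - (\<Sum>y\<in>Kset. chi (tr m (a^(q+1) * y + inverse y)))"
proof -
  define c where "c = a^(q+1)"
  define T where "T u = a*u + a^q * inverse u" for u
  define R where "R x = x + c * inverse x" for x
  have aQ: "a^(q*q) = a" by (rule fermatq)
  have cF: "c \<in> SF"
  proof -
    have "c^q = a^(q*q) * a^q" by (simp add: c_def power_mult[symmetric] power_add[symmetric] algebra_simps)
    also have "\<dots> = c" by (simp add: aQ c_def mult.commute)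
    finally show ?thesis by (simp add: subF_iff)
  qed
  have trT: "tr (2*m) (a*u) = tr m (T u)" if "u \<in> UU" for u
    using that by (simp add: tr_split T_def power_mult_distrib inv_q)
  have TF: "T u \<in> SF" if u: "u \<in> UU" for u
  proof -
    have unz: "u \<noteq> 0" using u U_nz by blast
    have "(T u)^q = a^q * u^q + a^(q*q) * inverse (u^q)"
      by (simp add: T_def pow2i_add power_mult_distrib power_inverse power_mult[symmetric])
    also have "\<dots> = T u" using u by (simp add: inv_q aQ T_def add.commute)
    finally show ?thesis by (simp add: subF_iff)
  qed
  have RF: "R x \<in> SF" if "x \<in> Kset" for x
    using that cF by (auto simp: R_def Kset_def intro!: subF_add subF_mult subF_inv)
  have quad1: "x^2 + t*x + c = 0" if "x \<in> Kset" "R x = t" for x t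
  proof -
    have "x \<noteq> 0" using that by (simp add: Kset_def)
    hence "t*x = x^2 + c" using that(2) by (simp add: R_def field_simps power2_eq_square)
    hence "x^2 + t*x + c = (x^2 + x^2) + (c + c)" by (simp add: algebra_simps)
    thus ?thesis by simp
  qed
  have quad2: "(a*u)^2 + t*(a*u) + c = 0" if "u \<in> UU" "T u = t" for u t
  proof -
    have "u \<noteq> 0" using that U_nz by blast
    hence h: "t * u = a*(u*u) + a^q" using that(2) by (simp add: T_def field_simps)
    have "t*(a*u) = a*(t*u)" by (simp add: ac_simps)
    also have "\<dots> = (a*u)^2 + c" by (simp add: h c_def algebra_simps power2_eq_square)
    finally have "t*(a*u) = (a*u)^2 + c" .
    hence "(a*u)^2 + t*(a*u) + c = ((a*u)^2 + (a*u)^2) + (c + c)" by (simp add: algebra_simps)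
    thus ?thesis by simp
  qed
  define N1 where "N1 t = card {x\<in>Kset. R x = t}" for t
  define N2 where "N2 t = card {u\<in>UU. T u = t}" for t
  have bound: "N1 t + N2 t \<le> 2" for t
  proof (cases "t = 0")
    case True
    have "\<forall>x\<in>{x\<in>Kset. R x = t}. \<forall>y\<in>{x\<in>Kset. R x = t}. x = y"
    proof (intro ballI)
      fix x y assume "x \<in> {x\<in>Kset. R x = t}" "y \<in> {x\<in>Kset. R x = t}"
      hence "x^2 + c = 0" "y^2 + c = 0" using quad1 True by fastforce+
      hence "x^2 = y^2" by (simp add: add_eq0_iff)
      thus "x = y" by (rule sq_inj)
    qed
    hence "N1 t \<le> 1" unfolding N1_def using card_le_Suc0_iff_eq[of "{x\<in>Kset. R x = t}"] by simp
    moreover have "\<forall>x\<in>{u\<in>UU. T u = t}. \<forall>y\<in>{u\<in>UU. T u = t}. x = y"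
    proof (intro ballI)
      fix x y assume "x \<in> {u\<in>UU. T u = t}" "y \<in> {u\<in>UU. T u = t}"
      hence "(a*x)^2 + c = 0" "(a*y)^2 + c = 0" using quad2 True by fastforce+
      hence "(a*x)^2 = (a*y)^2" by (simp add: add_eq0_iff)
      hence "a*x = a*y" by (rule sq_inj)
      thus "x = y" using anz by simp
    qed
    hence "N2 t \<le> 1" unfolding N2_def using card_le_Suc0_iff_eq[of "{u\<in>UU. T u = t}"] by simp
    ultimately show ?thesis by simp
  next
    case False
    define X1 where "X1 = {x\<in>Kset. R x = t}"
    define X2 where "X2 = {u\<in>UU. T u = t}"
    have inj: "inj_on (\<lambda>u. a*u) X2" using anz by (auto simp: inj_on_def)
    have dj: "X1 \<inter> (\<lambda>u. a*u) ` X2 = {}"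
    proof (rule ccontr)
      assume "X1 \<inter> (\<lambda>u. a*u) ` X2 \<noteq> {}"
      then obtain u where u: "u \<in> X2" "a*u \<in> X1" by auto
      let ?x = "a*u"
      have xK: "?x \<in> Kset" "R ?x = t" using u by (auto simp: X1_def)
      have "?x^(q+1) = c" using u by (simp add: X2_def c_def power_mult_distrib U_iff)
      moreover have "?x^(q+1) = ?x * ?x" using xK by (simp add: Kset_def subF_iff power_Suc2)
      ultimately have xc: "c = ?x * ?x" by simp
      have xnz: "?x \<noteq> 0" using xK by (simp add: Kset_def)
      have "c * inverse ?x = ?x * ?x * inverse ?x" by (simp only: xc)
      also have "\<dots> = ?x" using xnz by (metis mult.assoc right_inverse mult_1_right)
      finally have "R ?x = ?x + ?x" by (simp only: R_def)
      thus False using xK False by simp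
    qed
    have "N1 t + N2 t = card (X1 \<union> (\<lambda>u. a*u) ` X2)"
    proof -
      have "N1 t = card X1" "N2 t = card X2" by (simp_all add: N1_def N2_def X1_def X2_def)
      moreover have "card ((\<lambda>u. a*u) ` X2) = card X2" by (rule card_image[OF inj])
      ultimately show ?thesis using dj by (simp add: card_Un_disjoint)
    qed
    also have "\<dots> \<le> card {x. x^2 + t*x + c = 0}"
      by (rule card_mono) (auto simp: X1_def X2_def intro: quad1 quad2)
    also have "\<dots> \<le> 2" by (rule card_quad)
    finally show ?thesis .
  qed
  have s1: "(\<Sum>t\<in>SF. N1 t) = q - 1"
  proof -
    have "(\<Sum>t\<in>SF. \<Sum>x\<in>{x\<in>Kset. R x = t}. (1::nat)) = (\<Sum>x\<in>Kset. 1)"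
      by (rule sum.group) (auto intro: RF)
    thus ?thesis using cardK by (simp add: N1_def)
  qed
  have s2: "(\<Sum>t\<in>SF. N2 t) = q + 1"
  proof -
    have "(\<Sum>t\<in>SF. \<Sum>u\<in>{u\<in>UU. T u = t}. (1::nat)) = (\<Sum>u\<in>UU. 1)"
      by (rule sum.group) (auto intro: TF)
    thus ?thesis using cardU by (simp add: N2_def)
  qed
  have each: "N1 t + N2 t = 2" if t: "t \<in> SF" for t
  proof -
    have "(\<Sum>t\<in>SF. 2 - (N1 t + N2 t)) = (\<Sum>t\<in>SF. 2) - (\<Sum>t\<in>SF. N1 t + N2 t)"
      by (rule sum_subtractf_nat) (simp add: bound)
    also have "\<dots> = 0" using s1 s2 card_subF q_ge2 by (simp add: sum.distrib)
    finally have "\<forall>t\<in>SF. 2 - (N1 t + N2 t) = 0" by simp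
    thus ?thesis using t bound[of t] by fastforce
  qed
  have A: "(\<Sum>u\<in>UU. chi (tr (2*m) (a*u))) = (\<Sum>t\<in>SF. int (N2 t) * chi (tr m t))"
  proof -
    have "(\<Sum>u\<in>UU. chi (tr (2*m) (a*u))) = (\<Sum>u\<in>UU. chi (tr m (T u)))"
      by (rule sum.cong) (simp_all add: trT)
    also have "\<dots> = (\<Sum>t\<in>SF. \<Sum>u\<in>{u\<in>UU. T u = t}. chi (tr m (T u)))"
      by (rule sum.group[symmetric]) (auto intro: TF)
    also have "\<dots> = (\<Sum>t\<in>SF. int (N2 t) * chi (tr m t))"
      by (rule sum.cong) (simp_all add: N2_def)
    finally show ?thesis .
  qed
  have B: "(\<Sum>x\<in>Kset. chi (tr m (R x))) = (\<Sum>t\<in>SF. int (N1 t) * chi (tr m t))"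
  proof -
    have "(\<Sum>x\<in>Kset. chi (tr m (R x))) = (\<Sum>t\<in>SF. \<Sum>x\<in>{x\<in>Kset. R x = t}. chi (tr m (R x)))"
      by (rule sum.group[symmetric]) (auto intro: RF)
    also have "\<dots> = (\<Sum>t\<in>SF. int (N1 t) * chi (tr m t))"
      by (rule sum.cong) (simp_all add: N1_def)
    finally show ?thesis .
  qed
  have "(\<Sum>t\<in>SF. int (N2 t) * chi (tr m t)) + (\<Sum>t\<in>SF. int (N1 t) * chi (tr m t))
        = (\<Sum>t\<in>SF. 2 * chi (tr m t))"
    unfolding sum.distrib[symmetric]
  proof (rule sum.cong)
    fix t assume "t \<in> SF"
    hence "int (N1 t) + int (N2 t) = 2" using each by (metis of_nat_add of_nat_numeral)
    thus "int (N2 t) * chi (tr m t) + int (N1 t) * chi (tr m t) = 2 * chi (tr m t)"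
      by (metis add.commute distrib_right)
  qed simp
  also have "\<dots> = 2 * (\<Sum>t\<in>SF. chi (tr m t))" by (simp add: sum_distrib_left)
  also have "(\<Sum>t\<in>SF. chi (tr m t)) = 0"
    by (rule balanced) (use card_subF mpos in \<open>auto simp: subF_iff\<close>)
  finally have AB: "(\<Sum>u\<in>UU. chi (tr (2*m) (a*u))) = - (\<Sum>x\<in>Kset. chi (tr m (R x)))"
    using A B by simp
  have "(\<Sum>x\<in>Kset. chi (tr m (R x))) = (\<Sum>y\<in>Kset. chi (tr m (c * y + inverse y)))"
    by (rule sum.reindex_bij_witness[of _ inverse inverse])
       (auto simp: Kset_def R_def subF_inv add.commute)
  thus ?thesis using AB by (simp add: c_def)
qed

end

lemma reindex_powi:
  fixes A :: "'a::field set" and s \<alpha> :: int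
  assumes "\<And>v. v \<in> A \<Longrightarrow> v powi s \<in> A" "\<And>v. v \<in> A \<Longrightarrow> v powi \<alpha> \<in> A"
    "\<And>v. v \<in> A \<Longrightarrow> (v powi s) powi \<alpha> = v" "\<And>v. v \<in> A \<Longrightarrow> (v powi \<alpha>) powi s = v"
  shows "(\<Sum>v\<in>A. h (v powi s)) = (\<Sum>u\<in>A. (h u :: int))"
  by (rule sum.reindex_bij_witness[where i="\<lambda>v. v powi \<alpha>" and j="\<lambda>v. v powi s"]) (use assms in auto)

lemma geom: "((w::'a::comm_ring_1) - 1) * (\<Sum>i=1..K. w^i) = w^(Suc K) - w"
proof (induction K)
  case 0 thus ?case by simp
next
  case (Suc K)
  have "(w - 1) * (\<Sum>i=1..Suc K. w^i) = (w - 1) * (\<Sum>i=1..K. w^i) + (w - 1) * w^(Suc K)"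
    by (simp add: algebra_simps)
  also have "\<dots> = w^(Suc (Suc K)) - w" using Suc by (simp add: algebra_simps)
  finally show ?case .
qed

lemma pow_one_powi: "(v::'a::field)^d = 1 \<Longrightarrow> (v powi e)^d = 1"
proof -
  assume "v^d = 1"
  have "(v powi e)^d = v powi (e * int d)" by (rule power_int_power')
  also have "\<dots> = (v^d) powi e" by (simp add: power_int_power mult.commute)
  finally show ?thesis using \<open>v^d = 1\<close> by simp
qed

context ff
begin

lemma kloost_eq:
  assumes "abar \<in> SF" "abar \<noteq> 0"
  shows "kloost m abar = (\<Sum>z\<in>Kset. chi (tr m (abar * z + inverse z))) + chi (tr m ((0::'a)^(q-2)))"
proof -
  have "kloost m abar = (\<Sum>x\<in>SF. chi (tr m (abar * x + x^(q-2))))" by (simp add: kloost_def)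
  also have "\<dots> = chi (tr m (abar * 0 + 0^(q-2))) + (\<Sum>x\<in>SF - {0}. chi (tr m (abar * x + x^(q-2))))"
    by (subst sum.remove[of SF 0]) auto
  also have "(\<Sum>x\<in>SF - {0}. chi (tr m (abar * x + x^(q-2)))) = (\<Sum>z\<in>Kset. chi (tr m (abar * z + inverse z)))"
  proof (rule sum.cong)
    fix z assume z: "z \<in> Kset"
    hence "z^(q-1) = 1" "z \<noteq> 0" by (auto simp: K_iff)
    moreover have "z^(q-1) = z^(q-2) * z"
    proof -
      have "q - 1 = Suc (q - 2)" using q_ge2 by simp
      thus ?thesis by (simp only: power_Suc2)
    qed
    ultimately have "z^(q-2) = inverse z" by (metis inverse_unique mult.commute)
    thus "chi (tr m (abar * z + z^(q-2))) = chi (tr m (abar * z + inverse z))" by simp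
  qed (simp add: Kset_def)
  finally show ?thesis by (simp add: add.commute)
qed

lemma kloost_sq:
  assumes ab: "abar \<in> SF"
  shows "(\<Sum>y\<in>Kset. chi (tr m (abar^2 * y + inverse y))) = (\<Sum>z\<in>Kset. chi (tr m (abar * z + inverse z)))"
proof -
  have inj: "inj_on (\<lambda>z. z^2) Kset" by (auto simp: inj_on_def intro: sq_inj)
  have sub: "(\<lambda>z. z^2) ` Kset \<subseteq> Kset" by (auto simp: Kset_def intro: subF_pow)
  have im: "(\<lambda>z. z^2) ` Kset = Kset" by (rule endo_inj_surj[OF _ sub inj]) simp
  have "(\<Sum>y\<in>Kset. chi (tr m (abar^2 * y + inverse y))) =
        (\<Sum>z\<in>Kset. chi (tr m (abar^2 * z^2 + inverse (z^2))))"
    by (subst im[symmetric]) (simp add: sum.reindex[OF inj])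
  also have "\<dots> = (\<Sum>z\<in>Kset. chi (tr m (abar * z + inverse z)))"
  proof (rule sum.cong)
    fix z assume z: "z \<in> Kset"
    have w: "abar * z + inverse z \<in> SF" using z ab by (auto simp: Kset_def intro!: subF_add subF_mult subF_inv)
    have "abar^2 * z^2 + inverse (z^2) = (abar * z + inverse z)^2"
      by (simp add: sq_add power_mult_distrib power_inverse)
    also have "tr m \<dots> = tr m (abar * z + inverse z)" using w by (simp add: subF_iff tr_sq_arg)
    finally show "chi (tr m (abar^2 * z^2 + inverse (z^2))) = chi (tr m (abar * z + inverse z))" by simp
  qed simp
  finally show ?thesis .
qed

end

lemma powi_inv:
  fixes v :: "'a::field" and s \<alpha> \<beta> :: int
  assumes "v^d = 1" "s * \<alpha> + int d * \<beta> = 1" "d > 0"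
  shows "(v powi s) powi \<alpha> = v"
proof -
  have vnz: "v \<noteq> 0" proof
    assume "v = 0" thus False using assms(1,3) by (simp add: power_0_left)
  qed
  have "s * \<alpha> = 1 + int d * (- \<beta>)" using assms(2) by simp
  hence "(v powi s) powi \<alpha> = v powi (1 + int d * (- \<beta>))" by (simp add: power_int_mult[symmetric])
  also have "\<dots> = v powi 1 * v powi (int d * (- \<beta>))" using vnz by (rule power_int_add[OF disjI1])
  also have "v powi (int d * (- \<beta>)) = (v powi (int d)) powi (- \<beta>)" by (rule power_int_mult)
  also have "\<dots> = 1" using assms(1) by simp
  finally show ?thesis by simp
qed

context ff
begin

lemma G_val:
  fixes s :: int and N :: nat
  assumes N: "q + 1 = 3 * N" and v: "v \<in> UU"
  shows "(\<Sum>i=1..N-1. tr (2*m) (a * v powi (3 * int i + s))) =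
         (if v^3 = 1 then 0 else tr (2*m) (a * v powi s))"
proof -
  have vnz: "v \<noteq> 0" using v U_nz by blast
  define w where "w = v^3"
  have pw: "v powi (3 * int i + s) = v powi s * w^i" for i
  proof -
    have "v powi (3 * int i + s) = v powi (3 * int i) * v powi s" using vnz by (rule power_int_add[OF disjI1])
    also have "v powi (3 * int i) = v ^ (3 * i)"
    proof -
      have e: "3 * int i = int (3 * i)" by simp
      show ?thesis by (simp only: e power_int_of_nat)
    qed
    also have "\<dots> = w^i" by (simp add: w_def power_mult)
    finally show ?thesis by (simp add: mult.commute)
  qed
  have "(\<Sum>i=1..N-1. tr (2*m) (a * v powi (3 * int i + s))) = tr (2*m) (a * v powi s * (\<Sum>i=1..N-1. w^i))"
    by (simp add: pw tr_sum sum_distrib_left mult.assoc)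
  also have "(\<Sum>i=1..N-1. w^i) = (if v^3 = 1 then 0 else 1)"
  proof (cases "w = 1")
    case True
    have "even q" using mpos by simp
    hence "odd N" using N by presburger
    then obtain k where "N = 2 * k + 1" by (rule oddE)
    hence k: "N - 1 = 2 * k" by simp
    have "(\<Sum>i=1..N-1. w^i) = of_nat (N - 1)" using True by simp
    also have "\<dots> = 2 * of_nat k" using k by simp
    also have "\<dots> = 0" by (simp add: two0)
    finally show ?thesis using True w_def by simp
  next
    case False
    have N1: "Suc (N - 1) = N" using N by (cases N) auto
    have "v^(q+1) = 1" using v by (simp add: U_iff)
    hence wN: "w^N = 1" unfolding w_def power_mult[symmetric] N[symmetric] .
    have "(w - 1) * (\<Sum>i=1..N-1. w^i) = w^Suc (N-1) - w" by (rule geom)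
    also have "\<dots> = 1 - w" using N1 wN by simp
    finally have "(w - 1) * ((\<Sum>i=1..N-1. w^i) + 1) = 0" by (simp add: algebra_simps)
    hence "(\<Sum>i=1..N-1. w^i) + 1 = 0" using False by simp
    hence "(\<Sum>i=1..N-1. w^i) = 1" by (simp add: add_eq0_iff)
    thus ?thesis using False w_def by simp
  qed
  finally show ?thesis by simp
qed

end

context ff
begin

lemma S_formula:
  fixes s :: int
  assumes gcd: "gcd s (int (q+1)) = 1"
  shows "(\<Sum>v\<in>UU. chi (if v^3 = 1 then 0 else tr (2*m) (a * v powi s))) =
         (\<Sum>u\<in>UU. chi (tr (2*m) (a*u))) + int (card {v\<in>UU. v^3 = 1})
           - (\<Sum>u\<in>{v\<in>UU. v^3 = 1}. chi (tr (2*m) (a*u)))"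
proof -
  obtain \<alpha> \<beta> where ab: "\<alpha> * s + \<beta> * int (q+1) = 1" using bezout_int[of s "int (q+1)"] gcd by auto
  have e1: "s * \<alpha> + int (q+1) * \<beta> = 1" using ab by (simp add: algebra_simps)
  have e2: "\<alpha> * s + int (q+1) * \<beta> = 1" using ab by (simp add: algebra_simps)
  have inv1: "(v powi s) powi \<alpha> = v" if "v \<in> UU" for v
    using that by (intro powi_inv[OF _ e1]) (simp_all add: U_iff)
  have inv2: "(v powi \<alpha>) powi s = v" if "v \<in> UU" for v
    using that by (intro powi_inv[OF _ e2]) (simp_all add: U_iff)
  have mU: "v powi e \<in> UU" if "v \<in> UU" for v e
    using that unfolding U_iff by (rule pow_one_powi)
  have mC: "v powi e \<in> {v\<in>UU. v^3 = 1}" if "v \<in> {v\<in>UU. v^3 = 1}" for v e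
    using that unfolding mem_Collect_eq U_iff by (blast intro: pow_one_powi)
  let ?h = "\<lambda>u. chi (tr (2*m) (a*u))"
  have rA: "(\<Sum>v\<in>UU. ?h (v powi s)) = (\<Sum>u\<in>UU. ?h u)"
    by (rule reindex_powi[OF mU mU inv1 inv2])
  have iC1: "(v powi s) powi \<alpha> = v" if "v \<in> {v\<in>UU. v^3 = 1}" for v using that inv1 by simp
  have iC2: "(v powi \<alpha>) powi s = v" if "v \<in> {v\<in>UU. v^3 = 1}" for v using that inv2 by simp
  have rC: "(\<Sum>v\<in>{v\<in>UU. v^3 = 1}. ?h (v powi s)) = (\<Sum>u\<in>{v\<in>UU. v^3 = 1}. ?h u)"
    by (rule reindex_powi[OF mC mC iC1 iC2])
  have "(\<Sum>v\<in>UU. chi (if v^3 = 1 then 0 else tr (2*m) (a * v powi s))) =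
        (\<Sum>v\<in>UU. ?h (v powi s) + (if v^3 = 1 then 1 - ?h (v powi s) else 0))"
    by (rule sum.cong) (auto simp: chi_def)
  also have "\<dots> = (\<Sum>v\<in>UU. ?h (v powi s)) + (\<Sum>v\<in>{v\<in>UU. v^3 = 1}. 1 - ?h (v powi s))"
    by (simp add: sum.distrib sum.inter_filter)
  also have "(\<Sum>v\<in>{v\<in>UU. v^3 = 1}. 1 - ?h (v powi s)) =
             int (card {v\<in>UU. v^3 = 1}) - (\<Sum>v\<in>{v\<in>UU. v^3 = 1}. ?h (v powi s))"
    by (simp add: sum_subtractf)
  finally show ?thesis using rA rC by simp
qed

lemma xi_facts:
  fixes \<xi> :: 'a and N :: nat
  assumes rng: "range (\<lambda>j::nat. \<xi> ^ j) = UU" and N: "q + 1 = 3 * N"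
  shows "{v\<in>UU. v^3 = 1} = (\<lambda>j. \<xi>^(j*N)) ` {..2}"
    and "inj_on (\<lambda>j. \<xi>^(j*N)) {..2}"
    and "\<xi>^N \<noteq> 1" and "(\<xi>^N)^3 = 1"
proof -
  have xiU: "\<xi>^j \<in> UU" for j using rng by blast
  have xq: "\<xi>^(q+1) = 1" using xiU[of 1] by (simp add: U_iff)
  have red: "\<xi>^j = \<xi>^(j mod (q+1))" for j
  proof -
    have "\<xi>^j = \<xi>^((j div (q+1)) * (q+1) + j mod (q+1))" by (simp only: div_mult_mod_eq)
    also have "\<dots> = (\<xi>^(q+1))^(j div (q+1)) * \<xi>^(j mod (q+1))"
      by (simp only: power_add power_mult mult.commute[of "j div (q+1)"])
    finally show ?thesis using xq by simp
  qed
  have "(\<lambda>j. \<xi>^j) ` {..<q+1} = UU"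
  proof
    show "(\<lambda>j. \<xi>^j) ` {..<q+1} \<subseteq> UU" using xiU by auto
    show "UU \<subseteq> (\<lambda>j. \<xi>^j) ` {..<q+1}"
    proof
      fix v assume "v \<in> UU"
      then obtain j where "v = \<xi>^j" using rng by blast
      hence "v = \<xi>^(j mod (q+1))" using red by simp
      moreover have "j mod (q+1) \<in> {..<q+1}" by simp
      ultimately show "v \<in> (\<lambda>j. \<xi>^j) ` {..<q+1}" by blast
    qed
  qed
  hence "card ((\<lambda>j. \<xi>^j) ` {..<q+1}) = card {..<q+1}" using cardU by simp
  hence xinj: "inj_on (\<lambda>j. \<xi>^j) {..<q+1}" by (rule eq_card_imp_inj_on[rotated]) simp
  have Npos: "N > 0" using N by auto
  have lt: "j * N < q + 1" if "j \<le> 2" for j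
  proof -
    have "j * N \<le> 2 * N" using that by simp
    also have "\<dots> < 3 * N" using Npos by simp
    finally show ?thesis using N by simp
  qed
  show inj: "inj_on (\<lambda>j. \<xi>^(j*N)) {..2}"
  proof (rule inj_onI)
    fix i j assume ij: "i \<in> {..2}" "j \<in> {..2}" "\<xi>^(i*N) = \<xi>^(j*N)"
    have "i * N \<in> {..<q+1}" "j * N \<in> {..<q+1}" using ij lt by auto
    hence "i * N = j * N" using xinj ij(3) by (simp add: inj_on_eq_iff)
    thus "i = j" using Npos by simp
  qed
  have cube: "(\<xi>^(j*N))^3 = 1" for j
  proof -
    have "j * N * 3 = (q+1) * j" using N by simp
    hence "(\<xi>^(j*N))^3 = (\<xi>^(q+1))^j" by (simp only: power_mult[symmetric])
    thus ?thesis using xq by simp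
  qed
  have sub: "(\<lambda>j. \<xi>^(j*N)) ` {..2} \<subseteq> {v\<in>UU. v^3 = 1}" using xiU cube by auto
  have c3: "card ((\<lambda>j. \<xi>^(j*N)) ` {..2}) = 3" using card_image[OF inj] by simp
  have "card {v\<in>UU. v^3 = 1} \<le> card {x::'a. x^3 = 1}" by (rule card_mono) auto
  also have "\<dots> \<le> 3" by (rule card_pow_c) simp
  finally have "card {v\<in>UU. v^3 = 1} \<le> card ((\<lambda>j. \<xi>^(j*N)) ` {..2})" using c3 by simp
  thus "{v\<in>UU. v^3 = 1} = (\<lambda>j. \<xi>^(j*N)) ` {..2}"
    using card_seteq[OF _ sub] by simp
  show "(\<xi>^N)^3 = 1" using cube[of 1] by simp
  show "\<xi>^N \<noteq> 1"
  proof
    assume "\<xi>^N = 1"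
    hence "\<xi>^(1*N) = \<xi>^(0*N)" by simp
    moreover have "(1::nat) \<in> {..2}" "(0::nat) \<in> {..2}" by auto
    ultimately have "(1::nat) = 0" using inj by (rule inj_onD[rotated 1])
    thus False by simp
  qed
qed

lemma omega_sum:
  assumes "(w::'a)^3 = 1" "w \<noteq> 1"
  shows "tr (2*m) a + tr (2*m) (a*w) + tr (2*m) (a*w^2) = 0"
proof -
  have "(w - 1) * (w^2 + w + 1) = w^3 - 1" by (simp add: algebra_simps power2_eq_square power3_eq_cube two0)
  hence "(w - 1) * (w^2 + w + 1) = 0" using assms by simp
  hence z: "w^2 + w + 1 = 0" using assms by simp
  have "tr (2*m) a + tr (2*m) (a*w) + tr (2*m) (a*w^2) = tr (2*m) (a * (w^2 + w + 1))"
    by (simp add: tr_add algebra_simps)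
  thus ?thesis using z by simp
qed

end

theorem corollary5:
  fixes m n k :: nat and s :: int and a abar \<xi> :: "'a::{field,finite}"
  assumes "m > 0" and "3 dvd (2 ^ m + 1 :: nat)" and "n = 2 * m"
    and "card (UNIV :: 'a set) = 2 ^ n"
    and "\<xi> \<in> unitU m" and "range (\<lambda>j::nat. \<xi> ^ j) = unitU m"
    and "gcd s (2 ^ m + 1) = 1"
    and "a \<noteq> 0" and "abar \<in> subF m" and "k \<le> 2 ^ m" and "a = abar * \<xi> ^ k"
  defines "f \<equiv> (\<lambda>x::'a. if x = 0 then 0 else
       (\<Sum>i = 1..(2 ^ m + 1) div 3 - 1.
          tr n (a * x powi ((3 * int i + s) * (2 ^ m - 1)))))"
  shows "(bent n f \<longleftrightarrow>
           kloost m abar = 3 - (\<Sum>j\<le>2. chi (tr n (a * \<xi> ^ (j * ((2 ^ m + 1) div 3))))))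
       \<and> (bent n f \<longrightarrow>
           kloost m abar =
             (if tr n a = 0 \<and> tr n (a * \<xi> ^ ((2 ^ m + 1) div 3)) = 0
                 \<and> tr n (a * \<xi> ^ (2 * ((2 ^ m + 1) div 3))) = 0
              then 0 else 4))"
proof -
  have nn: "n = 2 * m" by (rule assms(3))
  interpret ff m "TYPE('a)" by unfold_locales (use assms(1,3,4) in auto)
  define N :: nat where "N = (2^m + 1) div 3"
  have N: "q + 1 = 3 * N" unfolding N_def using assms(2) by simp
  define G where "G v = (\<Sum>i = 1..N - 1. tr (2*m) (a * v powi (3 * int i + s)))" for v
  have fG: "f x = (if x = 0 then 0 else G (x^(q-1)))" for x
  proof (cases "x = 0")
    case False
    have e: "x powi ((3 * int i + s) * (2^m - 1)) = (x^(q-1)) powi (3 * int i + s)" for i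
    proof -
      have eq: "(3 * int i + s) * (2^m - 1) = int (q - 1) * (3 * int i + s)"
        by (simp add: of_nat_diff mult.commute)
      have "x powi ((3 * int i + s) * (2^m - 1)) = (x powi int (q-1)) powi (3*int i + s)"
        unfolding eq by (rule power_int_mult)
      thus ?thesis by (simp only: power_int_of_nat)
    qed
    show ?thesis using False by (simp add: f_def G_def nn e N_def)
  qed (simp add: f_def)
  have G01: "G v = 0 \<or> G v = 1" for v
  proof -
    have "G v = tr (2*m) (\<Sum>i = 1..N - 1. a * v powi (3 * int i + s))" by (simp add: G_def tr_sum)
    thus ?thesis using tr01n by simp
  qed
  define S where "S = (\<Sum>v\<in>UU. chi (G v))"
  have gcd': "gcd s (int (q+1)) = 1" using assms(7) by (simp add: add.commute)
  have "S = (\<Sum>v\<in>UU. chi (if v^3 = 1 then 0 else tr (2*m) (a * v powi s)))"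
    unfolding S_def by (rule sum.cong) (simp, simp only: G_def G_val[OF N])
  also have "\<dots> = (\<Sum>u\<in>UU. chi (tr (2*m) (a*u))) + int (card {v\<in>UU. v^3 = 1})
           - (\<Sum>u\<in>{v\<in>UU. v^3 = 1}. chi (tr (2*m) (a*u)))" by (rule S_formula[OF gcd'])
  finally have S1: "S = (\<Sum>u\<in>UU. chi (tr (2*m) (a*u))) + int (card {v\<in>UU. v^3 = 1})
           - (\<Sum>u\<in>{v\<in>UU. v^3 = 1}. chi (tr (2*m) (a*u)))" .
  note xf = xi_facts[OF assms(6) N]
  define B where "B = (\<Sum>j\<le>2. chi (tr (2*m) (a * \<xi>^(j*N))))"
  have cC: "card {v\<in>UU. v^3 = 1} = 3" using xf(1) card_image[OF xf(2)] by simp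
  have sC: "(\<Sum>u\<in>{v\<in>UU. v^3 = 1}. chi (tr (2*m) (a*u))) = B"
    unfolding xf(1) B_def by (simp add: sum.reindex[OF xf(2)])
  have abnz: "abar \<noteq> 0" using assms(8,11) by auto
  have ab2: "a^(q+1) = abar^2"
  proof -
    have "abar^q = abar" using assms(9) by (simp add: subF_iff)
    hence "abar^(q+1) = abar^2" by (simp add: power2_eq_square)
    moreover have "(\<xi>^k)^(q+1) = 1"
    proof -
      have x1: "\<xi>^(q+1) = 1" using assms(5) unfolding U_iff .
      have "(\<xi>^k)^(q+1) = (\<xi>^(q+1))^k" by (simp only: power_mult[symmetric] mult.commute)
      thus ?thesis using x1 by simp
    qed
    ultimately have "abar^(q+1) * (\<xi>^k)^(q+1) = abar^2" by simp
    moreover have "a^(q+1) = abar^(q+1) * (\<xi>^k)^(q+1)" using assms(11) by (simp only: power_mult_distrib)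
    ultimately show ?thesis by simp
  qed
  define K0 where "K0 = (\<Sum>z\<in>Kset. chi (tr m (abar * z + inverse z)))"
  have A': "(\<Sum>u\<in>UU. chi (tr (2*m) (a*u))) = - K0"
    using kloost_sum[OF assms(8)] kloost_sq[OF assms(9)] ab2 by (simp add: K0_def)
  have Sval: "S = 3 - K0 - B" using S1 A' cC sC by simp
  have kl: "kloost m abar = K0 + chi (tr m ((0::'a)^(q-2)))"
    using kloost_eq[OF assms(9) abnz] by (simp add: K0_def)
  have bentS: "bent (2*m) f \<longleftrightarrow> S = 1"
  proof
    assume "S = 1" thus "bent (2*m) f" using bent_char(1)[OF G01 fG] by (simp add: S_def)
  next
    assume bt: "bent (2*m) f"
    hence disj: "S = 1 \<or> (int q - 1) * S = - (int q + 1)" using bent_char(2)[OF G01 fG] by (simp add: S_def)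
    show "S = 1"
    proof (cases "m = 1")
      case True
      hence "N = 1" using N by simp
      hence "G v = 0" for v by (simp add: G_def)
      hence "S = 3" using cardU True by (simp add: S_def chi_def)
      thus ?thesis using disj True by simp
    next
      case False
      hence "m \<ge> 2" using assms(1) by simp
      hence "(2::nat)^2 \<le> 2^m" by (intro power_increasing) auto
      hence "int 4 \<le> int q" by (simp only: of_nat_le_iff) simp
      hence q4: "int q \<ge> 4" by (simp only: of_nat_numeral)
      show ?thesis
      proof (rule ccontr)
        assume "S \<noteq> 1"
        hence e: "(int q - 1) * S = - (int q + 1)" using disj by simp
        consider "S \<ge> 0" | "S = -1" | "S \<le> -2" by linarith
        thus False
        proof cases
          case 1 hence "(int q - 1) * S \<ge> 0" using q4 by simp
          thus False using e q4 by simp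
        next
          case 2 thus False using e by simp
        next
          case 3
          hence "(int q - 1) * S \<le> (int q - 1) * (-2)" using q4 by (intro mult_left_mono) auto
          thus False using e q4 by simp
        qed
      qed
    qed
  qed
  have part1: "bent (2*m) f \<longleftrightarrow> kloost m abar = 3 - B"
  proof (cases "m = 1")
    case True
    hence "N = 1" using N by simp
    hence "G v = 0" for v by (simp add: G_def)
    hence "S = 3" using cardU True by (simp add: S_def chi_def)
    moreover have "kloost m abar = K0 - 1" using kl True by (simp add: tr_def chi_def)
    ultimately show ?thesis using bentS Sval by simp
  next
    case False
    hence "q - 2 > 0"
    proof -
      have "m \<ge> 2" using False assms(1) by simp
      hence "(2::nat)^2 \<le> 2^m" by (intro power_increasing) auto
      thus ?thesis by simp
    qed
    hence z: "(0::'a)^(q-2) = 0" by (simp add: zero_power)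
    have "kloost m abar = K0 + chi (tr m (0::'a))" using kl by (simp only: z)
    hence "kloost m abar = K0 + 1" by (simp add: chi_def)
    thus ?thesis using bentS Sval by linarith
  qed
  have Bexp: "B = chi (tr (2*m) a) + chi (tr (2*m) (a * \<xi>^N)) + chi (tr (2*m) (a * \<xi>^(2*N)))"
    by (simp add: B_def numeral_2_eq_2 mult.commute)
  have tsum: "tr (2*m) a + tr (2*m) (a * \<xi>^N) + tr (2*m) (a * \<xi>^(2*N)) = 0"
    using omega_sum[OF xf(4) xf(3), of a] by (simp add: power_mult[symmetric] mult.commute)
  have part2: "bent (2*m) f \<longrightarrow> kloost m abar =
     (if tr (2*m) a = 0 \<and> tr (2*m) (a * \<xi>^N) = 0 \<and> tr (2*m) (a * \<xi>^(2*N)) = 0 then 0 else 4)"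
  proof
    assume "bent (2*m) f"
    hence kb: "kloost m abar = 3 - B" using part1 by simp
    show "kloost m abar = (if tr (2*m) a = 0 \<and> tr (2*m) (a * \<xi>^N) = 0 \<and> tr (2*m) (a * \<xi>^(2*N)) = 0 then 0 else 4)"
      using tr01n[of a] tr01n[of "a * \<xi>^N"] tr01n[of "a * \<xi>^(2*N)"] tsum kb Bexp
      by (auto simp: chi_def two0)
  qed
  show ?thesis using part1 part2 unfolding B_def N_def nn by simp
qed


end
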